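(* Let $\mathcal X$ be finite with $|\mathcal X|\ge n\ge1$, $s:2^{\mathcal X}\to\mathbb R$ non-negative, monotone and submodular, $d$ a metric on $\mathcal X$ with sum-dispersion $\mathrm{div}$, $\lambda>0$, $\alpha\in(0,1]$. If $B_n$ is the output of an $\alpha$-approximate greedy run for $\tilde a=\tfrac12s+\lambda\,\mathrm{div}$ with cardinality $n$, then $a(B_n)\ge\frac\alpha2\max_{B\subseteq\mathcal X,|B|=n}a(B)$, where $a=s+\lambda\,\mathrm{div}$.
   Context: Marginal gain: $\Delta_f(x\mid B):=f(B\cup\{x\})-f(B)$. $s$ is monotone if $\Delta_s(x\mid B)\ge0$ for all $B$, $x\notin B$; non-negative if $s\ge0$; submodular if $\Delta_s(x\mid B')\ge\Delta_s(x\mid B)$ for all $B'\subseteq B\subseteq\mathcal X$ and $x\in\mathcal X\setminus B$. Sum-dispersion: $\mathrm{div}(B):=\frac12\sum_{x\in B}\sum_{x'\in B}d(x,x')$. An $\alpha$-approximate greedy run for $f$ with cardinality $n$: $B_0=\emptyset$ and for $i=0,\dots,n-1$ an element $x_i\in\mathcal X\setminus B_i$ is chosen with $\Delta_f(x_i\mid B_i)\ge\alpha\max_{x\in\mathcal X\setminus B_i}\Delta_f(x\mid B_i)$, and $B_{i+1}=B_i\cup\{x_i\}$; its output is $B_n$. *)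

theory Defs
  imports Main "HOL-Library.FuncSet" Complex_Main
begin

definition marginal_gain :: "('a set \<Rightarrow> real) \<Rightarrow> 'a \<Rightarrow> 'a set \<Rightarrow> real" where
  "marginal_gain f x B = f (B \<union> {x}) - f B"

definition monotone_setfun :: "'a set \<Rightarrow> ('a set \<Rightarrow> real) \<Rightarrow> bool" where
  "monotone_setfun X f \<longleftrightarrow>
     (\<forall>B x. B \<subseteq> X \<and> x \<in> X - B \<longrightarrow> marginal_gain f x B \<ge> 0)"

definition nonneg_setfun :: "'a set \<Rightarrow> ('a set \<Rightarrow> real) \<Rightarrow> bool" where
  "nonneg_setfun X f \<longleftrightarrow> (\<forall>B. B \<subseteq> X \<longrightarrow> f B \<ge> 0)"

definition submodular_setfun :: "'a set \<Rightarrow> ('a set \<Rightarrow> real) \<Rightarrow> bool" where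
  "submodular_setfun X f \<longleftrightarrow>
     (\<forall>B' B x. B' \<subseteq> B \<and> B \<subseteq> X \<and> x \<in> X - B \<longrightarrow>
        marginal_gain f x B' \<ge> marginal_gain f x B)"

definition metric_on :: "'a set \<Rightarrow> ('a \<Rightarrow> 'a \<Rightarrow> real) \<Rightarrow> bool" where
  "metric_on X d \<longleftrightarrow>
     (\<forall>x\<in>X. \<forall>y\<in>X. d x y \<ge> 0 \<and> (d x y = 0 \<longleftrightarrow> x = y) \<and> d x y = d y x) \<and>
     (\<forall>x\<in>X. \<forall>y\<in>X. \<forall>z\<in>X. d x z \<le> d x y + d y z)"

definition sum_dispersion :: "('a \<Rightarrow> 'a \<Rightarrow> real) \<Rightarrow> 'a set \<Rightarrow> real" where
  "sum_dispersion d B = (1/2) * (\<Sum>x\<in>B. \<Sum>x'\<in>B. d x x')"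

text \<open>An alpha-approximate greedy run for f with cardinality n, given by the sequence of
  chosen elements x_0, ..., x_{n-1}; B_i is the set of the first i chosen elements.\<close>
definition approx_greedy_run ::
  "'a set \<Rightarrow> ('a set \<Rightarrow> real) \<Rightarrow> real \<Rightarrow> nat \<Rightarrow> (nat \<Rightarrow> 'a) \<Rightarrow> bool" where
  "approx_greedy_run X f \<alpha> n xs \<longleftrightarrow>
     (\<forall>i<n. xs i \<in> X - xs ` {..<i} \<and>
        marginal_gain f (xs i) (xs ` {..<i}) \<ge>
          \<alpha> * Max ((\<lambda>x. marginal_gain f x (xs ` {..<i})) ` (X - xs ` {..<i})))"

end

theory Submission
  imports Defs
begin

definition DD :: "('a \<Rightarrow> 'a \<Rightarrow> real) \<Rightarrow> 'a set \<Rightarrow> 'a set \<Rightarrow> real" where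
  "DD d P Q = (\<Sum>x\<in>P. \<Sum>y\<in>Q. d x y)"

lemma m_nonneg: "metric_on X d \<Longrightarrow> x \<in> X \<Longrightarrow> y \<in> X \<Longrightarrow> d x y \<ge> 0"
  unfolding metric_on_def by blast
lemma m_refl: "metric_on X d \<Longrightarrow> x \<in> X \<Longrightarrow> d x x = 0"
  unfolding metric_on_def by blast
lemma m_sym: "metric_on X d \<Longrightarrow> x \<in> X \<Longrightarrow> y \<in> X \<Longrightarrow> d x y = d y x"
  unfolding metric_on_def by blast
lemma m_tri: "metric_on X d \<Longrightarrow> x \<in> X \<Longrightarrow> y \<in> X \<Longrightarrow> z \<in> X \<Longrightarrow> d x z \<le> d x y + d y z"
  unfolding metric_on_def by blast

lemma DD_union1: "finite P \<Longrightarrow> finite P' \<Longrightarrow> P \<inter> P' = {} \<Longrightarrow> DD d (P \<union> P') Q = DD d P Q + DD d P' Q"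
  by (simp add: DD_def sum.union_disjoint)
lemma DD_union2: "finite Q \<Longrightarrow> finite Q' \<Longrightarrow> Q \<inter> Q' = {} \<Longrightarrow> DD d P (Q \<union> Q') = DD d P Q + DD d P Q'"
  by (simp add: DD_def sum.union_disjoint sum.distrib)
lemma DD_swap: assumes "metric_on X d" "P \<subseteq> X" "Q \<subseteq> X" shows "DD d P Q = DD d Q P"
proof -
  have "DD d P Q = (\<Sum>y\<in>Q. \<Sum>x\<in>P. d x y)" unfolding DD_def by (rule sum.swap)
  also have "\<dots> = DD d Q P" unfolding DD_def
    by (intro sum.cong refl) (metis assms m_sym subsetD)
  finally show ?thesis .
qed
lemma DD_nonneg: "metric_on X d \<Longrightarrow> P \<subseteq> X \<Longrightarrow> Q \<subseteq> X \<Longrightarrow> DD d P Q \<ge> 0"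
  unfolding DD_def by (intro sum_nonneg) (meson m_nonneg subsetD)

lemma tri_sum:
  assumes m: "metric_on X d" and fY: "finite Y" and YX: "Y \<subseteq> X" and w: "w \<in> X"
  shows "DD d Y Y \<le> 2 * (real (card Y) - 1) * (\<Sum>u\<in>Y. d u w)"
proof -
  have per: "(\<Sum>v\<in>Y. d u v) \<le> real (card Y) * d u w + (\<Sum>v\<in>Y. d w v) - 2 * d u w" if u: "u \<in> Y" for u
  proof -
    have uX: "u \<in> X" using u YX by auto
    have "(\<Sum>v\<in>Y. d u v) = d u u + (\<Sum>v\<in>Y-{u}. d u v)" using fY u by (rule sum.remove)
    also have "\<dots> = (\<Sum>v\<in>Y-{u}. d u v)" using m uX m_refl by simp
    also have "\<dots> \<le> (\<Sum>v\<in>Y-{u}. d u w + d w v)"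
      by (intro sum_mono) (meson m m_tri uX w YX DiffD1 subsetD)
    also have "\<dots> = real (card (Y-{u})) * d u w + (\<Sum>v\<in>Y-{u}. d w v)" by (simp add: sum.distrib)
    also have "(\<Sum>v\<in>Y-{u}. d w v) = (\<Sum>v\<in>Y. d w v) - d w u"
      using sum.remove[OF fY u, of "d w"] by simp
    also have "d w u = d u w" using m m_sym uX w by metis
    also have "real (card (Y-{u})) = real (card Y) - 1"
    proof -
      have c1: "card Y \<ge> 1" using fY u by (metis One_nat_def Suc_leI card_gt_0_iff empty_iff)
      have "card (Y-{u}) = card Y - 1" using fY u by (simp add: card_Diff_singleton)
      then show ?thesis using c1 by (simp add: of_nat_diff)
    qed
    finally show ?thesis by (simp add: algebra_simps)
  qed
  have "DD d Y Y \<le> (\<Sum>u\<in>Y. real (card Y) * d u w + (\<Sum>v\<in>Y. d w v) - 2 * d u w)"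
    unfolding DD_def by (intro sum_mono per)
  also have "\<dots> = real (card Y) * (\<Sum>u\<in>Y. d u w) + real (card Y) * (\<Sum>v\<in>Y. d w v) - 2 * (\<Sum>u\<in>Y. d u w)"
    by (simp add: sum.distrib sum_subtractf sum_distrib_left)
  also have "(\<Sum>v\<in>Y. d w v) = (\<Sum>u\<in>Y. d u w)"
    by (intro sum.cong refl) (metis m m_sym w YX subsetD)
  finally show ?thesis by (simp add: algebra_simps)
qed

lemma tri_sum2:
  assumes m: "metric_on X d" and "finite Y" "Y \<subseteq> X" "finite W" "W \<subseteq> X"
  shows "real (card W) * DD d Y Y \<le> 2 * (real (card Y) - 1) * DD d Y W"
proof -
  have "real (card W) * DD d Y Y = (\<Sum>w\<in>W. DD d Y Y)" by simp
  also have "\<dots> \<le> (\<Sum>w\<in>W. 2 * (real (card Y) - 1) * (\<Sum>u\<in>Y. d u w))"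
    using assms by (intro sum_mono tri_sum[OF m]) auto
  also have "\<dots> = 2 * (real (card Y) - 1) * (\<Sum>w\<in>W. \<Sum>u\<in>Y. d u w)"
    by (simp add: sum_distrib_left)
  also have "(\<Sum>w\<in>W. \<Sum>u\<in>Y. d u w) = DD d Y W" unfolding DD_def by (rule sum.swap)
  finally show ?thesis .
qed


lemma arith_core:
  fixes a b c n i DAA DCC DAC DCB :: real
  assumes "n = a + c" "i = a + b" "b + 1 \<le> c" "a \<ge> 0" "b \<ge> 0" "DAC \<ge> 0" "DCB \<ge> 0"
    and h1: "c * DAA \<le> 2 * (a - 1) * DAC"
    and h2: "a * DCC \<le> 2 * (c - 1) * DAC"
    and h3: "b * DCC \<le> 2 * (c - 1) * DCB"
  shows "c * i * (DAA + DCC + 2 * DAC) \<le> 2 * n * (n - 1) * (DAC + DCB)"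
proof -
  have i0: "i \<ge> 0" using assms by simp
  have e1: "i * (c * DAA) \<le> i * (2 * (a - 1) * DAC)" using h1 i0 by (rule mult_left_mono)
  have e2: "(c - b) * (a * DCC) \<le> (c - b) * (2 * (c - 1) * DAC)" using h2 assms(3) by (intro mult_left_mono) auto
  have e3: "n * (b * DCC) \<le> n * (2 * (c - 1) * DCB)" using h3 assms by (intro mult_left_mono) auto
  have e4: "0 \<le> (c - b) * a * DAC" using assms by simp
  have e5: "0 \<le> n * a * DCB" using assms by simp
  have eq: "2 * n * (n - 1) * (DAC + DCB) - c * i * (DAA + DCC + 2 * DAC)
     = (i * (2 * (a - 1) * DAC) - i * (c * DAA)) + ((c - b) * (2 * (c - 1) * DAC) - (c - b) * (a * DCC))
       + (n * (2 * (c - 1) * DCB) - n * (b * DCC)) + 2 * ((c - b) * a * DAC) + 2 * (n * a * DCB)"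
    unfolding assms(1,2) by (simp add: algebra_simps)
  show ?thesis using e1 e2 e3 e4 e5 eq by linarith
qed

lemma disp_step:
  assumes m: "metric_on X d" and fS: "finite S" "S \<subseteq> X" and fO: "finite Q" "Q \<subseteq> X"
    and cS: "card S = i" and cO: "card Q = n" and lt: "i < n"
  shows "real (card (Q - S)) * real i * DD d Q Q \<le> 2 * real n * (real n - 1) * DD d (Q - S) S"
proof -
  define A where "A = Q \<inter> S"
  define C where "C = Q - S"
  define B where "B = S - Q"
  have fin: "finite A" "finite B" "finite C" using fS fO unfolding A_def B_def C_def by auto
  have sub: "A \<subseteq> X" "B \<subseteq> X" "C \<subseteq> X" using fS fO unfolding A_def B_def C_def by auto
  have O_eq: "Q = A \<union> C" and S_eq: "S = A \<union> B" unfolding A_def B_def C_def by auto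
  have dAC: "A \<inter> C = {}" and dAB: "A \<inter> B = {}" unfolding A_def B_def C_def by auto
  have cn: "card A + card C = n" using cO O_eq dAC fin card_Un_disjoint by metis
  have ci: "card A + card B = i" using cS S_eq dAB fin card_Un_disjoint by metis
  have bc: "card B + 1 \<le> card C" using cn ci lt by linarith
  have DOO: "DD d Q Q = DD d A A + DD d C C + 2 * DD d A C"
  proof -
    have "DD d Q Q = DD d A A + DD d A C + (DD d C A + DD d C C)"
      unfolding O_eq using fin dAC by (simp add: DD_union1 DD_union2)
    moreover have "DD d C A = DD d A C" using DD_swap[OF m] sub by metis
    ultimately show ?thesis by simp
  qed
  have DCS: "DD d C S = DD d A C + DD d C B"
  proof -
    have "DD d C S = DD d C A + DD d C B" unfolding S_eq using fin dAB by (simp add: DD_union2)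
    moreover have "DD d C A = DD d A C" using DD_swap[OF m] sub by metis
    ultimately show ?thesis by simp
  qed
  have h1: "real (card C) * DD d A A \<le> 2 * (real (card A) - 1) * DD d A C"
    using tri_sum2[OF m] fin sub by blast
  have h2: "real (card A) * DD d C C \<le> 2 * (real (card C) - 1) * DD d A C"
    using tri_sum2[OF m, of C A] fin sub DD_swap[OF m, of C A] by simp
  have h3: "real (card B) * DD d C C \<le> 2 * (real (card C) - 1) * DD d C B"
    using tri_sum2[OF m] fin sub by blast
  have "real (card C) * real i * (DD d A A + DD d C C + 2 * DD d A C)
        \<le> 2 * real n * (real n - 1) * (DD d A C + DD d C B)"
    apply (rule arith_core[OF _ _ _ _ _ _ _ h1 h2 h3])
    using cn ci bc DD_nonneg[OF m] sub by (auto simp flip: of_nat_add)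
  then show ?thesis using DOO DCS unfolding C_def by simp
qed



lemma s_mono_union:
  assumes mo: "monotone_setfun X s" and fD: "finite D"
  shows "B \<union> D \<subseteq> X \<Longrightarrow> s B \<le> s (B \<union> D)"
  using fD
proof (induction D rule: finite_induct)
  case empty then show ?case by simp
next
  case (insert x D)
  have IH: "s B \<le> s (B \<union> D)" using insert by auto
  show ?case
  proof (cases "x \<in> B \<union> D")
    case True
    then have "B \<union> insert x D = B \<union> D" by auto
    then show ?thesis using IH by simp
  next
    case False
    have "marginal_gain s x (B \<union> D) \<ge> 0" using mo insert.prems False
      unfolding monotone_setfun_def by auto
    moreover have "B \<union> insert x D = (B \<union> D) \<union> {x}" by auto
    ultimately show ?thesis using IH unfolding marginal_gain_def by simp
  qed
qed

lemma submod_sum: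
  assumes sm: "submodular_setfun X s" and fC: "finite C"
  shows "S \<union> C \<subseteq> X \<Longrightarrow> S \<inter> C = {} \<Longrightarrow> s (S \<union> C) - s S \<le> (\<Sum>v\<in>C. marginal_gain s v S)"
  using fC
proof (induction C rule: finite_induct)
  case empty then show ?case by simp
next
  case (insert x C)
  have IH: "s (S \<union> C) - s S \<le> (\<Sum>v\<in>C. marginal_gain s v S)" using insert by auto
  have "marginal_gain s x S \<ge> marginal_gain s x (S \<union> C)"
    using sm insert.prems insert.hyps unfolding submodular_setfun_def by auto
  moreover have "S \<union> insert x C = (S \<union> C) \<union> {x}" by auto
  ultimately show ?case using IH insert.hyps unfolding marginal_gain_def by simp
qed

lemma div_marg:
  assumes m: "metric_on X d" and fS: "finite S" and SX: "S \<subseteq> X" and v: "v \<in> X" "v \<notin> S"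
  shows "sum_dispersion d (S \<union> {v}) - sum_dispersion d S = (\<Sum>y\<in>S. d v y)"
proof -
  have e: "S \<union> {v} = insert v S" by auto
  have sym: "(\<Sum>x\<in>S. d x v) = (\<Sum>y\<in>S. d v y)"
    by (intro sum.cong refl) (metis m m_sym v(1) SX subsetD)
  have "(\<Sum>x\<in>insert v S. \<Sum>x'\<in>insert v S. d x x')
     = d v v + (\<Sum>y\<in>S. d v y) + ((\<Sum>x\<in>S. d x v) + (\<Sum>x\<in>S. \<Sum>x'\<in>S. d x x'))"
    using fS v by (simp add: sum.distrib)
  then show ?thesis unfolding sum_dispersion_def e using sym m_refl[OF m v(1)] by (simp add: field_simps)
qed

lemma gauss_real: "(\<Sum>i<n. real i) = real n * (real n - 1) / 2"
  by (induction n) (auto simp: field_simps)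



theorem mainTheorem13:
  fixes X :: "'a set" and s :: "'a set \<Rightarrow> real" and d :: "'a \<Rightarrow> 'a \<Rightarrow> real"
    and n :: nat and lam \<alpha> :: real and xs :: "nat \<Rightarrow> 'a"
  assumes "finite X" and "1 \<le> n" and "n \<le> card X"
    and "nonneg_setfun X s" and "monotone_setfun X s" and "submodular_setfun X s"
    and "metric_on X d"
    and "lam > 0" and "0 < \<alpha>" and "\<alpha> \<le> 1"
    and "approx_greedy_run X (\<lambda>B. (1/2) * s B + lam * sum_dispersion d B) \<alpha> n xs"
  shows "s (xs ` {..<n}) + lam * sum_dispersion d (xs ` {..<n}) \<ge>
           (\<alpha> / 2) * Max ((\<lambda>B. s B + lam * sum_dispersion d B) ` {B. B \<subseteq> X \<and> card B = n})"
proof -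
  note fX = assms(1) and nn = assms(4) and mo = assms(5) and sm = assms(6) and m = assms(7)
  define f where "f = (\<lambda>B. (1/2) * s B + lam * sum_dispersion d B)"
  define S where "S = (\<lambda>i. xs ` {..<i})"
  have greedy: "xs i \<in> X - S i \<and> marginal_gain f (xs i) (S i) \<ge> \<alpha> * Max ((\<lambda>x. marginal_gain f x (S i)) ` (X - S i))"
    if "i < n" for i
    using assms(11) that unfolding approx_greedy_run_def f_def S_def by blast
  have SSuc: "S (Suc i) = S i \<union> {xs i}" for i unfolding S_def by (auto simp: lessThan_Suc)
  have SX: "S i \<subseteq> X" if "i \<le> n" for i
    using that greedy unfolding S_def by fastforce
  have fS: "finite (S i)" for i by (simp add: S_def)
  have cS: "i \<le> n \<Longrightarrow> card (S i) = i" for i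
  proof (induction i)
    case 0 then show ?case by (simp add: S_def)
  next
    case (Suc i)
    then have "xs i \<notin> S i" using greedy by auto
    then show ?case using Suc fS by (simp add: SSuc)
  qed
  define M where "M = {B. B \<subseteq> X \<and> card B = n}"
  have finM: "finite M" unfolding M_def using fX by (rule rev_finite_subset[OF finite_Pow_iff[THEN iffD2]]) auto
  have neM: "M \<noteq> {}" unfolding M_def using obtain_subset_with_card_n[OF assms(3)] by blast
  obtain Op where OpM: "Op \<in> M" and OpMax: "Max ((\<lambda>B. s B + lam * sum_dispersion d B) ` M) = s Op + lam * sum_dispersion d Op"
  proof -
    have "Max ((\<lambda>B. s B + lam * sum_dispersion d B) ` M) \<in> (\<lambda>B. s B + lam * sum_dispersion d B) ` M"
      using finM neM by (intro Max_in) auto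
    then show ?thesis using that by (metis (no_types, lifting) imageE)
  qed
  have OpX: "Op \<subseteq> X" and cOp: "card Op = n" using OpM unfolding M_def by auto
  have fOp: "finite Op" using OpX fX finite_subset by blast
  define t where "t = s Op - s (S n)"
  define K where "K = lam * sum_dispersion d Op / (real n * (real n - 1))"
  define L where "L = (\<lambda>i::nat. t / (2 * real n) + K * real i)"
  have step: "f (S (Suc i)) - f (S i) \<ge> \<alpha> * L i" if i: "i < n" for i
  proof -
    define C where "C = Op - S i"
    define g where "g = (\<lambda>x. marginal_gain f x (S i))"
    have SiX: "S i \<subseteq> X" using SX i by simp
    have cSi: "card (S i) = i" using cS i by simp
    have Cne: "C \<noteq> {}"
    proof
      assume "C = {}"
      then have "Op \<subseteq> S i" unfolding C_def by auto
      then have "card Op \<le> card (S i)" using fS card_mono by blast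
      then show False using cOp cSi i by simp
    qed
    have fC: "finite C" unfolding C_def using fOp by simp
    have cpos: "card C > 0" using Cne fC card_gt_0_iff by blast
    have cle: "card C \<le> n" unfolding C_def using cOp fOp by (metis Diff_subset card_mono)
    have CX: "C \<subseteq> X - S i" unfolding C_def using OpX by auto
    have g_eq: "g v = (1/2) * marginal_gain s v (S i) + lam * (\<Sum>y\<in>S i. d v y)" if v: "v \<in> X - S i" for v
    proof -
      have "g v = (1/2) * marginal_gain s v (S i) + lam * (sum_dispersion d (S i \<union> {v}) - sum_dispersion d (S i))"
        unfolding g_def f_def marginal_gain_def by (simp add: algebra_simps)
      then show ?thesis using div_marg[OF m fS SiX] v by simp
    qed
    define T where "T = (\<Sum>v\<in>C. marginal_gain s v (S i))"
    have sumg: "(\<Sum>v\<in>C. g v) = (1/2) * T + lam * DD d C (S i)"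
    proof -
      have "(\<Sum>v\<in>C. g v) = (\<Sum>v\<in>C. (1/2) * marginal_gain s v (S i) + lam * (\<Sum>y\<in>S i. d v y))"
        using g_eq CX by (intro sum.cong) auto
      then show ?thesis unfolding T_def DD_def by (simp add: sum.distrib sum_distrib_left)
    qed
    have T1: "s (S i \<union> C) - s (S i) \<le> T" unfolding T_def
      using submod_sum[OF sm fC] SiX CX by auto
    have "S i \<union> C = Op \<union> S i" unfolding C_def by auto
    moreover have "s Op \<le> s (Op \<union> S i)" using s_mono_union[OF mo fS] OpX SiX by auto
    moreover have "s (S i) \<le> s (S n)"
    proof -
      have "S i \<subseteq> S n" unfolding S_def using i by auto
      then have "S i \<union> S n = S n" by auto
      then show ?thesis using s_mono_union[OF mo fS, of "S i" n] SX by auto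
    qed
    ultimately have T2: "t \<le> T" using T1 unfolding t_def by (smt (verit))
    have T0: "T \<ge> 0" unfolding T_def
      using mo CX by (intro sum_nonneg) (auto simp: monotone_setfun_def SiX)
    have part1: "real (card C) * (t / (2 * real n)) \<le> (1/2) * T"
    proof (cases "t \<ge> 0")
      case True
      have "real (card C) * (t / (2 * real n)) = (real (card C) / real n) * t / 2" by simp
      also have "\<dots> \<le> 1 * t / 2"
        using True cle assms(2) by (intro divide_right_mono mult_right_mono) auto
      finally show ?thesis using T2 by simp
    next
      case False
      then have "real (card C) * (t / (2 * real n)) \<le> 0"
        using assms(2) by (intro mult_nonneg_nonpos divide_nonpos_pos) auto
      then show ?thesis using T0 by linarith
    qed
    have DDnn: "DD d C (S i) \<ge> 0" using DD_nonneg[OF m] CX SiX by auto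
    have part2: "real (card C) * (K * real i) \<le> lam * DD d C (S i)"
    proof (cases "i = 0")
      case True then show ?thesis using DDnn assms(8) by simp
    next
      case False
      then have n2: "real n * (real n - 1) > 0" using i by auto
      have ds: "real (card C) * real i * DD d Op Op \<le> 2 * real n * (real n - 1) * DD d C (S i)"
        unfolding C_def using disp_step[OF m fS SiX fOp OpX cSi cOp i] .
      have sd: "sum_dispersion d Op = DD d Op Op / 2" by (simp add: sum_dispersion_def DD_def)
      have "real (card C) * real i * sum_dispersion d Op / (real n * (real n - 1)) \<le> DD d C (S i)"
        using ds n2 unfolding sd by (simp add: divide_le_eq algebra_simps)
      then have "lam * (real (card C) * real i * sum_dispersion d Op / (real n * (real n - 1))) \<le> lam * DD d C (S i)"
        using assms(8) by (intro mult_left_mono) auto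
      then show ?thesis unfolding K_def by (simp add: algebra_simps)
    qed
    have cL: "real (card C) * L i \<le> (\<Sum>v\<in>C. g v)"
      using part1 part2 sumg unfolding L_def by (simp add: algebra_simps)
    define Mx where "Mx = Max ((\<lambda>x. marginal_gain f x (S i)) ` (X - S i))"
    have "g v \<le> Mx" if "v \<in> C" for v
      unfolding Mx_def g_def using that CX fX by (intro Max_ge) auto
    then have "(\<Sum>v\<in>C. g v) \<le> real (card C) * Mx" using sum_bounded_above[of C g Mx] by simp
    with cL have "real (card C) * L i \<le> real (card C) * Mx" by linarith
    then have LM: "L i \<le> Mx" using cpos by simp
    have "f (S (Suc i)) - f (S i) = g (xs i)" unfolding g_def marginal_gain_def SSuc ..
    also have "g (xs i) \<ge> \<alpha> * Mx" using greedy[OF i] unfolding g_def Mx_def by simp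
    finally show ?thesis using LM assms(9) by (smt (verit) mult_left_mono)
  qed
  have "(\<Sum>i<n. \<alpha> * L i) \<le> (\<Sum>i<n. f (S (Suc i)) - f (S i))" by (intro sum_mono step) auto
  also have "\<dots> = f (S n) - f (S 0)" by (rule sum_lessThan_telescope)
  finally have tel: "\<alpha> * (\<Sum>i<n. L i) \<le> f (S n) - f (S 0)" by (simp add: sum_distrib_left)
  have sumL: "(\<Sum>i<n. L i) = t / 2 + lam * sum_dispersion d Op / 2"
  proof -
    have "(\<Sum>i<n. L i) = real n * (t / (2 * real n)) + K * (\<Sum>i<n. real i)"
      unfolding L_def by (simp add: sum.distrib sum_distrib_left)
    also have "real n * (t / (2 * real n)) = t / 2" using assms(2) by simp
    also have "K * (\<Sum>i<n. real i) = lam * sum_dispersion d Op / 2"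
    proof (cases "n = 1")
      case True
      then obtain o1 where "Op = {o1}" using cOp card_1_singletonE by blast
      then have "sum_dispersion d Op = 0" using m_refl[OF m] OpX by (simp add: sum_dispersion_def)
      then show ?thesis using True by (simp add: K_def)
    next
      case False
      then have "real n * (real n - 1) \<noteq> 0" using assms(2) by auto
      then show ?thesis unfolding K_def gauss_real by simp
    qed
    finally show ?thesis .
  qed
  have f0: "f (S 0) \<ge> 0" using nn unfolding f_def S_def nonneg_setfun_def sum_dispersion_def by simp
  have sn: "s (S n) \<ge> 0" using nn SX unfolding nonneg_setfun_def by simp
  have main: "s (S n) + lam * sum_dispersion d (S n) \<ge> (\<alpha> / 2) * (s Op + lam * sum_dispersion d Op)"
  proof -
    have "s (S n) + lam * sum_dispersion d (S n) = f (S n) + (1/2) * s (S n)" unfolding f_def by simp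
    moreover have "f (S n) \<ge> \<alpha> * (t / 2 + lam * sum_dispersion d Op / 2)" using tel f0 sumL by simp
    moreover have "(1 - \<alpha>) * s (S n) \<ge> 0" using sn assms(10) by simp
    moreover have "(\<alpha> / 2) * (s Op + lam * sum_dispersion d Op) = \<alpha> * (t / 2 + lam * sum_dispersion d Op / 2) + \<alpha> * s (S n) / 2"
      unfolding t_def by (simp add: field_simps)
    moreover have "(1 - \<alpha>) * s (S n) = s (S n) - \<alpha> * s (S n)" by (simp add: algebra_simps)
    ultimately show ?thesis by linarith
  qed
  then show ?thesis using OpMax unfolding M_def S_def by simp
qed

end
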